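(* For $d=3$ and $\lambda\ge 2/\sqrt3$, the only positive solution $z$ of the fixed-point equation $z=\phi_3(z,\lambda)$ is $$\mu_{3,\infty}(\lambda)=\frac{3\lambda^2+\lambda\sqrt{9\lambda^2-12}+4}{\sqrt{18\lambda^2+6\lambda\sqrt{9\lambda^2-12}}},$$ and the corresponding alignment $\alpha_{3,\infty}(\lambda)=\omega_3(\mu_{3,\infty}(\lambda),\lambda)$ equals $$\alpha_{3,\infty}(\lambda)=\sqrt{\frac12+\sqrt{\frac{3\lambda^2-4}{12\lambda^2}}}.$$
   Context: For $d=3$: $\beta_3=1/\sqrt{6}\cdot\sqrt{4}\,$ i.e. $\beta_3=2/\sqrt6$, and $m_3(z)=\frac{2}{\beta_3^2}\left(-z+z\sqrt{1-\beta_3^2/z^2}\right)=-3z+3\sqrt{z^2-2/3}$. The functions are $\omega_3(z,\lambda)=\frac1\lambda\left(z+\frac13 m_3(z/2)\right)=\frac1\lambda\left(\frac z2+\sqrt{\frac{z^2}{4}-\frac23}\right)$ and $\phi_3(z,\lambda)=\lambda\,\omega_3(z,\lambda)^3-\frac12 m_3(z/2)$. *)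

theory Defs
  imports Complex_Main
begin

definition m3 :: "real \<Rightarrow> real" where
  "m3 z = -3 * z + 3 * sqrt (z^2 - 2/3)"

definition omega3 :: "real \<Rightarrow> real \<Rightarrow> real" where
  "omega3 z l = (1/l) * (z + (1/3) * m3 (z/2))"

definition phi3 :: "real \<Rightarrow> real \<Rightarrow> real" where
  "phi3 z l = l * (omega3 z l)^3 - (1/2) * m3 (z/2)"

definition mu3 :: "real \<Rightarrow> real" where
  "mu3 l = (3 * l^2 + l * sqrt (9 * l^2 - 12) + 4)
            / sqrt (18 * l^2 + 6 * l * sqrt (9 * l^2 - 12))"

end

theory Submission
  imports Defs
begin

lemma sqrt_part:
  fixes w :: real
  assumes "w > 0" "3*w^2 \<ge> 2"
  shows "sqrt ((w + 2/(3*w))^2/4 - 2/3) = (w - 2/(3*w))/2"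
proof -
  have e: "(w + 2/(3*w))^2/4 - 2/3 = ((w - 2/(3*w))/2)^2"
    using assms by (simp add: field_simps power2_eq_square)
  have "2/(3*w) \<le> w" using assms by (simp add: field_simps power2_eq_square)
  then show ?thesis unfolding e by simp
qed

lemma rep:
  fixes z :: real
  assumes "z > 0" "z^2/4 \<ge> 2/3"
  obtains w where "w > 0" "3*w^2 \<ge> 2" "z = w + 2/(3*w)"
proof -
  define s where "s = sqrt (z^2/4 - 2/3)"
  have s0: "s \<ge> 0" and s2: "s^2 = z^2/4 - 2/3" using assms by (auto simp: s_def)
  define w where "w = z/2 + s"
  have w0: "w > 0" using assms s0 by (simp add: w_def)
  have "w * (z/2 - s) = 2/3" using s2 by (simp add: w_def algebra_simps power2_eq_square)
  then have d: "z/2 - s = 2/(3*w)" using w0 by (simp add: field_simps)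
  have z: "z = w + 2/(3*w)" using d by (simp add: w_def)
  have "2/(3*w) \<le> w" using d s0 w_def by linarith
  then have "3*w^2 \<ge> 2" using w0 by (simp add: field_simps power2_eq_square)
  then show ?thesis using that w0 z by blast
qed

lemma eqn:
  fixes w l :: real
  assumes "w > 0" "3*w^2 \<ge> 2" "l > 0"
  shows "(w + 2/(3*w) = phi3 (w + 2/(3*w)) l) \<longleftrightarrow> 3*(w^2)^2 - 3*l^2*w^2 + l^2 = 0"
proof -
  have sq: "sqrt (((w + 2/(3*w))/2)^2 - 2/3) = (w - 2/(3*w))/2"
    using sqrt_part[OF assms(1,2)] by (simp add: power_divide)
  have om: "omega3 (w + 2/(3*w)) l = w / l"
    unfolding omega3_def m3_def sq using assms by (simp add: field_simps)
  have ph: "phi3 (w + 2/(3*w)) l = w^3/l^2 + 3*(w + 2/(3*w))/4 - 3*(w - 2/(3*w))/4"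
    unfolding phi3_def om m3_def sq using assms by (simp add: field_simps power3_eq_cube power2_eq_square)
  have w2: "144*w^2 \<noteq> 0" using assms by simp
  have "(w + 2/(3*w) = w^3/l^2 + 3*(w + 2/(3*w))/4 - 3*(w - 2/(3*w))/4) \<longleftrightarrow>
        144*w^2*(3*(w^2)^2 - 3*l^2*w^2 + l^2) = 0"
    using assms by (simp add: field_simps power2_eq_square power3_eq_cube) (auto simp: algebra_simps)
  then show ?thesis unfolding ph using w2 by simp
qed

lemma om:
  fixes w l :: real
  assumes "w > 0" "3*w^2 \<ge> 2" "l > 0"
  shows "omega3 (w + 2/(3*w)) l = w / l"
proof -
  have sq: "sqrt (((w + 2/(3*w))/2)^2 - 2/3) = (w - 2/(3*w))/2"
    using sqrt_part[OF assms(1,2)] by (simp add: power_divide)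
  show ?thesis
    unfolding omega3_def m3_def sq using assms by (simp add: field_simps)
qed

theorem lemma1:
  fixes l :: real
  assumes "l \<ge> 2 / sqrt 3"
  shows "{z::real. z > 0 \<and> z^2 / 4 \<ge> 2/3 \<and> z = phi3 z l} = {mu3 l}
     \<and> omega3 (mu3 l) l = sqrt (1/2 + sqrt ((3 * l^2 - 4) / (12 * l^2)))"
proof -
  have l0: "l > 0" using assms by (smt (verit) divide_pos_pos real_sqrt_gt_0_iff)
  have "l * sqrt 3 \<ge> 2" using assms by (simp add: field_simps)
  then have "(l * sqrt 3)^2 \<ge> 2^2" using l0 by (intro power_mono) auto
  then have l2: "3*l^2 \<ge> 4" by (simp add: power_mult_distrib mult.commute)
  define r where "r = sqrt (9*l^2 - 12)"
  have r0: "r \<ge> 0" and r2: "r^2 = 9*l^2 - 12" using l2 by (auto simp: r_def)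
  define u where "u = l^2/2 + l*r/6"
  have "l*r \<ge> 0" using l0 r0 by simp
  then have u23: "3*u \<ge> 2" using l2 by (simp add: u_def)
  have uq: "3*u^2 - 3*l^2*u + l^2 = 0"
  proof -
    have "3*u^2 - 3*l^2*u + l^2 = l^2*(r^2 - (9*l^2-12))/12"
      unfolding u_def by (simp add: algebra_simps power2_eq_square)
    then show ?thesis using r2 by simp
  qed
  define w0 where "w0 = sqrt u"
  have w0p: "w0 > 0" and w02: "w0^2 = u" using u23 by (auto simp: w0_def)
  have w0g: "3*w0^2 \<ge> 2" using w02 u23 by simp
  have s36: "sqrt (18 * l^2 + 6 * l * sqrt (9 * l^2 - 12)) = 6 * w0"
  proof -
    have "18 * l^2 + 6 * l * sqrt (9 * l^2 - 12) = (6*w0)^2"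
      using w02 by (simp add: u_def r_def[symmetric] power_mult_distrib algebra_simps)
    then show ?thesis using w0p by (metis less_eq_real_def mult_nonneg_nonneg real_sqrt_abs abs_of_nonneg zero_le_numeral)
  qed
  have mu: "mu3 l = w0 + 2/(3*w0)"
  proof -
    have "mu3 l = (3*l^2 + l*r + 4)/(6*w0)" unfolding mu3_def s36 r_def ..
    also have "3*l^2 + l*r + 4 = 6*w0^2 + 4" using w02 by (simp add: u_def)
    also have "(6*w0^2 + 4)/(6*w0) = w0 + 2/(3*w0)" using w0p
      by (simp add: field_simps power2_eq_square)
    finally show ?thesis .
  qed
  have inset: "mu3 l \<in> {z::real. z > 0 \<and> z^2 / 4 \<ge> 2/3 \<and> z = phi3 z l}"
  proof -
    have "3*(w0^2)^2 - 3*l^2*w0^2 + l^2 = 0" using uq w02 by simp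
    then have e: "mu3 l = phi3 (mu3 l) l" unfolding mu using eqn[OF w0p w0g l0] by simp
    have p: "mu3 l > 0" unfolding mu using w0p by (simp add: add_pos_pos)
    have "(w0 + 2/(3*w0))^2/4 - 2/3 = ((w0 - 2/(3*w0))/2)^2"
      using w0p by (simp add: field_simps power2_eq_square)
    then have "(mu3 l)^2/4 \<ge> 2/3" unfolding mu by (smt (verit) zero_le_power2)
    with e p show ?thesis by simp
  qed
  have uniq: "z = mu3 l" if z: "z > 0" "z^2/4 \<ge> 2/3" "z = phi3 z l" for z
  proof -
    obtain w where w: "w > 0" "3*w^2 \<ge> 2" "z = w + 2/(3*w)" using rep[OF z(1,2)] by blast
    have q: "3*(w^2)^2 - 3*l^2*w^2 + l^2 = 0" using eqn[OF w(1,2) l0] z(3) w(3) by simp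
    define v where "v = w^2"
    have "(6*v - 3*l^2)^2 - (l*r)^2 = 12*(3*(w^2)^2 - 3*l^2*w^2 + l^2) - l^2*(r^2 - (9*l^2-12))"
      unfolding v_def by (simp add: power2_eq_square algebra_simps)
    then have "(6*v - 3*l^2)^2 = (l*r)^2" using q r2 by simp
    then have "6*v - 3*l^2 = l*r \<or> 6*v - 3*l^2 = -(l*r)"
      by (simp add: power2_eq_iff)
    then have "v = u"
    proof
      assume "6*v - 3*l^2 = l*r" then show ?thesis by (simp add: u_def)
    next
      assume a: "6*v - 3*l^2 = -(l*r)"
      have "l*r \<le> 3*l^2 - 4" using a w(2) unfolding v_def by linarith
      then have "(l*r)^2 \<le> (3*l^2 - 4)^2" using l0 r0 by (intro power_mono) auto
      moreover have "(l*r)^2 = l^2*(9*l^2-12)" using r2 by (simp add: power_mult_distrib)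
      ultimately have "l^2*(9*l^2-12) \<le> (3*l^2 - 4)^2" by simp
      then have "3*l^2 \<le> 4" by (simp add: power2_eq_square algebra_simps)
      then have "r^2 = 0" using l2 r2 by simp
      then have "r = 0" by simp
      then show ?thesis using a by (simp add: u_def)
    qed
    then have "w = w0" using w(1) unfolding v_def w0_def by (metis less_imp_le real_sqrt_unique)
    then show ?thesis using w(3) mu by simp
  qed
  have set: "{z::real. z > 0 \<and> z^2 / 4 \<ge> 2/3 \<and> z = phi3 z l} = {mu3 l}"
    using inset uniq by blast
  have o: "omega3 (mu3 l) l = w0 / l" unfolding mu using om[OF w0p w0g l0] .
  have rr: "sqrt ((3 * l^2 - 4) / (12 * l^2)) = r/(6*l)"
  proof -
    have "(r/(6*l))^2 = (9*l^2-12)/(36*l^2)" using r2 by (simp add: power_divide power_mult_distrib)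
    also have "\<dots> = (3 * l^2 - 4) / (12 * l^2)" using l0 by (simp add: field_simps)
    finally have "(3 * l^2 - 4) / (12 * l^2) = (r/(6*l))^2" ..
    then show ?thesis using l0 r0 by simp
  qed
  have "w0 / l = sqrt (u / l^2)" using l0 by (simp add: w0_def real_sqrt_divide)
  also have "u / l^2 = 1/2 + r/(6*l)" using l0 by (simp add: u_def field_simps power2_eq_square)
  finally have "omega3 (mu3 l) l = sqrt (1/2 + sqrt ((3 * l^2 - 4) / (12 * l^2)))"
    using o rr by simp
  with set show ?thesis by blast
qed

end
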